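(* Let $\{w_k\}_{k\in\mathbb Z}$ be a zero-mean, unit-variance scalar Gaussian white-noise process and define $$x_k=w_k+\sum_{\ell=1}^\infty\frac{1}{1+\ell}w_{k-\ell},\qquad y_k=w_k,\qquad \xi_k=(x_k,y_k)^T.$$ Then the one-step forward prediction error covariance $\inf\mathbb E\{(\xi_0-\hat\xi)(\xi_0-\hat\xi)^*\}$ over $\hat\xi$ (componentwise) in the closed linear span of $\{x_k,y_k:k\le-1\}$ equals $\begin{pmatrix}1&1\\1&1\end{pmatrix}$, while the backward (postdiction) error covariance, i.e. the same infimum over $\hat\xi$ in the closed linear span of $\{x_k,y_k:k\ge1\}$, equals the zero matrix; that is, the process is backward deterministic but not forward deterministic.
   Context: White noise means $\mathbb E\{w_k\bar w_\ell\}=\delta_{k\ell}$. Closed linear spans are taken in the Hilbert space of finite-variance random variables with inner product $\mathbb E\{u\bar v\}$; the infimum is in the sense of the positive-semidefinite order on $2\times2$ Hermitian matrices. *)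

theory Defs
  imports "HOL-Probability.Probability"
begin

definition L2rv :: "'a measure \<Rightarrow> ('a \<Rightarrow> real) set" where
  "L2rv M = {f. f \<in> borel_measurable M \<and> integrable M (\<lambda>\<omega>. (f \<omega>)^2)}"

definition lin_span_rv :: "('a \<Rightarrow> real) set \<Rightarrow> ('a \<Rightarrow> real) set" where
  "lin_span_rv S = {h. \<exists>F c. finite F \<and> F \<subseteq> S \<and> h = (\<lambda>\<omega>. \<Sum>f\<in>F. c f * f \<omega>)}"

definition closed_span_L2 :: "'a measure \<Rightarrow> ('a \<Rightarrow> real) set \<Rightarrow> ('a \<Rightarrow> real) set" where
  "closed_span_L2 M S = {g \<in> L2rv M. \<forall>e>0. \<exists>h\<in>lin_span_rv S.
      (\<integral>\<omega>. (g \<omega> - h \<omega>)^2 \<partial>M) < e}"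

definition err_cov :: "'a measure \<Rightarrow> ('a \<Rightarrow> real^2) \<Rightarrow> ('a \<Rightarrow> real^2) \<Rightarrow> real^2^2" where
  "err_cov M xi xih = (\<chi> i j. \<integral>\<omega>. (xi \<omega> - xih \<omega>) $ i * (xi \<omega> - xih \<omega>) $ j \<partial>M)"

definition loewner_le :: "real^2^2 \<Rightarrow> real^2^2 \<Rightarrow> bool" where
  "loewner_le A B \<longleftrightarrow> (\<forall>z::real^2. z \<bullet> (A *v z) \<le> z \<bullet> (B *v z))"

definition symmetric_mat :: "real^2^2 \<Rightarrow> bool" where
  "symmetric_mat A \<longleftrightarrow> transpose A = A"

definition is_loewner_inf :: "(real^2^2) set \<Rightarrow> real^2^2 \<Rightarrow> bool" where
  "is_loewner_inf S P \<longleftrightarrow> symmetric_mat P \<and> (\<forall>A\<in>S. loewner_le P A) \<and>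
     (\<forall>Q. symmetric_mat Q \<and> (\<forall>A\<in>S. loewner_le Q A) \<longrightarrow> loewner_le Q P)"

end

theory Submission
  imports Defs
begin

lemma summable_inv_sq: "summable (\<lambda>m::nat. 1 / (real m + 1)^2)"
proof -
  have "summable (\<lambda>n. inverse (real n ^ 2))" by (rule inverse_power_summable) simp
  hence "summable (\<lambda>n. inverse (real (Suc n) ^ 2))" by (subst summable_Suc_iff)
  thus ?thesis by (simp add: field_simps)
qed

lemma amgm_abs: "2 * \<bar>(a::real) * b\<bar> \<le> a\<^sup>2 + b\<^sup>2"
proof -
  have "0 \<le> (\<bar>a\<bar> - \<bar>b\<bar>)\<^sup>2" by simp
  thus ?thesis by (simp add: power2_diff abs_mult)
qed

lemma sq_sum_le: "((a::real) + b)\<^sup>2 \<le> 2*a\<^sup>2 + 2*b\<^sup>2"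
proof -
  have "0 \<le> (a - b)\<^sup>2" by simp
  thus ?thesis by (simp add: power2_diff power2_sum)
qed

lemma L2rvI: "f \<in> borel_measurable M \<Longrightarrow> integrable M (\<lambda>\<omega>. (f \<omega>)^2) \<Longrightarrow> f \<in> L2rv M"
  by (simp add: L2rv_def)

lemma L2rv_meas: "f \<in> L2rv M \<Longrightarrow> f \<in> borel_measurable M"
  by (simp add: L2rv_def)

lemma L2rv_int: "f \<in> L2rv M \<Longrightarrow> integrable M (\<lambda>\<omega>. (f \<omega>)^2)"
  by (simp add: L2rv_def)

lemma L2_mult_int:
  assumes "f \<in> L2rv M" "g \<in> L2rv M"
  shows "integrable M (\<lambda>\<omega>. f \<omega> * g \<omega>)"
proof (rule Bochner_Integration.integrable_bound[where f="\<lambda>\<omega>. (f \<omega>)^2 + (g \<omega>)^2"])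
  show "integrable M (\<lambda>\<omega>. (f \<omega>)^2 + (g \<omega>)^2)" 
    by (rule Bochner_Integration.integrable_add[OF L2rv_int L2rv_int]) (fact assms)+
  show "(\<lambda>\<omega>. f \<omega> * g \<omega>) \<in> borel_measurable M" using assms by (rule borel_measurable_times[OF L2rv_meas L2rv_meas])
  show "AE x in M. norm (f x * g x) \<le> norm ((f x)\<^sup>2 + (g x)\<^sup>2)"
  proof (intro AE_I2)
    fix x
    have "2 * \<bar>f x * g x\<bar> \<le> (f x)\<^sup>2 + (g x)\<^sup>2" by (rule amgm_abs)
    moreover have "0 \<le> \<bar>f x * g x\<bar>" by simp
    ultimately have "\<bar>f x * g x\<bar> \<le> (f x)\<^sup>2 + (g x)\<^sup>2" by linarith
    thus "norm (f x * g x) \<le> norm ((f x)\<^sup>2 + (g x)\<^sup>2)" by simp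
  qed
qed

lemma L2_add: "f \<in> L2rv M \<Longrightarrow> g \<in> L2rv M \<Longrightarrow> (\<lambda>\<omega>. f \<omega> + g \<omega>) \<in> L2rv M"
  apply (rule L2rvI)
   apply (rule borel_measurable_add[OF L2rv_meas L2rv_meas], assumption+)
  apply (simp only: power2_sum mult.assoc)
  apply (intro Bochner_Integration.integrable_add Bochner_Integration.integrable_mult_right L2rv_int L2_mult_int)
     apply assumption+
  done

lemma L2_scale: "f \<in> L2rv M \<Longrightarrow> (\<lambda>\<omega>. c * f \<omega>) \<in> L2rv M"
  apply (rule L2rvI)
   apply (rule borel_measurable_times[OF borel_measurable_const L2rv_meas], assumption)
  apply (simp only: power_mult_distrib)
  apply (intro Bochner_Integration.integrable_mult_right L2rv_int)
  apply assumption
  done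

lemma L2_neg: "f \<in> L2rv M \<Longrightarrow> (\<lambda>\<omega>. - f \<omega>) \<in> L2rv M"
  using L2_scale[of f M "-1"] by simp

lemma L2_diff: "f \<in> L2rv M \<Longrightarrow> g \<in> L2rv M \<Longrightarrow> (\<lambda>\<omega>. f \<omega> - g \<omega>) \<in> L2rv M"
  using L2_add[OF _ L2_neg, of f M g] by simp

lemma L2_zero: "(\<lambda>\<omega>. 0) \<in> L2rv M"
  by (rule L2rvI) auto

lemma L2_sum: "(\<And>i. i \<in> I \<Longrightarrow> f i \<in> L2rv M) \<Longrightarrow> (\<lambda>\<omega>. \<Sum>i\<in>I. f i \<omega>) \<in> L2rv M"
proof (induction I rule: infinite_finite_induct)
  case (infinite A) thus ?case by (simp add: L2_zero)
next
  case empty thus ?case by (simp add: L2_zero)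
next
  case (insert a A) thus ?case by (simp add: L2_add)
qed

lemma L2_sq_le:
  assumes "f \<in> L2rv M" "g \<in> L2rv M"
  shows "(\<integral>\<omega>. (f \<omega> + g \<omega>)^2 \<partial>M) \<le> 2 * (\<integral>\<omega>. (f \<omega>)^2 \<partial>M) + 2 * (\<integral>\<omega>. (g \<omega>)^2 \<partial>M)"
proof -
  have i1: "integrable M (\<lambda>\<omega>. (f \<omega> + g \<omega>)^2)" by (rule L2rv_int, rule L2_add[OF assms])
  have i2: "integrable M (\<lambda>\<omega>. 2 * (f \<omega>)^2 + 2 * (g \<omega>)^2)"
    by (intro Bochner_Integration.integrable_add Bochner_Integration.integrable_mult_right L2rv_int assms)
  have "(\<integral>\<omega>. (f \<omega> + g \<omega>)^2 \<partial>M) \<le> (\<integral>\<omega>. 2 * (f \<omega>)^2 + 2 * (g \<omega>)^2 \<partial>M)"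
    by (rule integral_mono[OF i1 i2 sq_sum_le])
  also have "\<dots> = 2 * (\<integral>\<omega>. (f \<omega>)^2 \<partial>M) + 2 * (\<integral>\<omega>. (g \<omega>)^2 \<partial>M)"
    using assms by (simp add: L2rv_int)
  finally show ?thesis .
qed



lemma lin_span_obtain:
  assumes "g \<in> lin_span_rv S"
  obtains F c where "finite F" "F \<subseteq> S" "g = (\<lambda>\<omega>. \<Sum>f\<in>F. c f * f \<omega>)"
proof -
  from assms have "\<exists>F c. finite F \<and> F \<subseteq> S \<and> g = (\<lambda>\<omega>. \<Sum>f\<in>F. c f * f \<omega>)"
    unfolding lin_span_rv_def by (rule CollectD)
  then obtain F c where "finite F \<and> F \<subseteq> S \<and> g = (\<lambda>\<omega>. \<Sum>f\<in>F. c f * f \<omega>)"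
    by (elim exE)
  thus ?thesis using that by (elim conjE)
qed

lemma lin_span_intro:
  assumes "finite F" "F \<subseteq> S" "g = (\<lambda>\<omega>. \<Sum>f\<in>F. c f * f \<omega>)"
  shows "g \<in> lin_span_rv S"
  unfolding lin_span_rv_def using assms by (intro CollectI exI conjI)

lemma lin_span_scale:
  assumes "g \<in> lin_span_rv S"
  shows "(\<lambda>\<omega>. a * g \<omega>) \<in> lin_span_rv S"
proof -
  obtain F c where F: "finite F" "F \<subseteq> S" "g = (\<lambda>\<omega>. \<Sum>f\<in>F. c f * f \<omega>)"
    using assms by (rule lin_span_obtain)
  have "(\<lambda>\<omega>. a * g \<omega>) = (\<lambda>\<omega>. \<Sum>f\<in>F. (a * c f) * f \<omega>)"
    unfolding F(3) by (simp add: sum_distrib_left mult.assoc)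
  thus ?thesis by (rule lin_span_intro[OF F(1,2)])
qed
lemma lin_span_zero: "(\<lambda>\<omega>. 0) \<in> lin_span_rv S"
  by (rule lin_span_intro[of "{}"]) auto

lemma lin_span_base: "f \<in> S \<Longrightarrow> f \<in> lin_span_rv S"
  by (rule lin_span_intro[of "{f}" _ _ "\<lambda>_. 1"]) auto

lemma lin_span_add:
  assumes "g \<in> lin_span_rv S" "h \<in> lin_span_rv S"
  shows "(\<lambda>\<omega>. g \<omega> + h \<omega>) \<in> lin_span_rv S"
proof -
  obtain F c where F: "finite F" "F \<subseteq> S" "g = (\<lambda>\<omega>. \<Sum>f\<in>F. c f * f \<omega>)"
    using assms(1) by (rule lin_span_obtain)
  obtain G d where G: "finite G" "G \<subseteq> S" "h = (\<lambda>\<omega>. \<Sum>f\<in>G. d f * f \<omega>)"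
    using assms(2) by (rule lin_span_obtain)
  define e where "e f = (if f \<in> F then c f else 0) + (if f \<in> G then d f else 0)" for f
  have "(\<lambda>\<omega>. g \<omega> + h \<omega>) = (\<lambda>\<omega>. \<Sum>f\<in>F \<union> G. e f * f \<omega>)"
  proof
    fix \<omega>
    have s1: "(\<Sum>f\<in>F \<union> G. (if f \<in> F then c f * f \<omega> else 0)) = (\<Sum>f\<in>F. c f * f \<omega>)"
    proof -
      have "(\<Sum>f\<in>F \<union> G. (if f \<in> F then c f * f \<omega> else 0)) = (\<Sum>f\<in>(F \<union> G) \<inter> F. c f * f \<omega>)"
        using F(1) G(1) by (simp only: sum.inter_restrict finite_Un)
      also have "(F \<union> G) \<inter> F = F" by (rule Int_absorb1) (rule Un_upper1)
      finally show ?thesis .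
    qed
    have s2: "(\<Sum>f\<in>F \<union> G. (if f \<in> G then d f * f \<omega> else 0)) = (\<Sum>f\<in>G. d f * f \<omega>)"
    proof -
      have "(\<Sum>f\<in>F \<union> G. (if f \<in> G then d f * f \<omega> else 0)) = (\<Sum>f\<in>(F \<union> G) \<inter> G. d f * f \<omega>)"
        using F(1) G(1) by (simp only: sum.inter_restrict finite_Un)
      also have "(F \<union> G) \<inter> G = G" by (rule Int_absorb1) (rule Un_upper2)
      finally show ?thesis .
    qed
    have "(\<Sum>f\<in>F \<union> G. e f * f \<omega>) = (\<Sum>f\<in>F \<union> G. (if f \<in> F then c f * f \<omega> else 0) + (if f \<in> G then d f * f \<omega> else 0))"
      unfolding e_def by (intro sum.cong refl) (auto simp: distrib_right)
    also have "\<dots> = (\<Sum>f\<in>F. c f * f \<omega>) + (\<Sum>f\<in>G. d f * f \<omega>)"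
      by (simp only: sum.distrib s1 s2)
    finally show "g \<omega> + h \<omega> = (\<Sum>f\<in>F \<union> G. e f * f \<omega>)" unfolding F(3) G(3) by simp
  qed
  thus ?thesis by (rule lin_span_intro[rotated 2]) (use F G in auto)
qed

lemma lin_span_diff:
  assumes "g \<in> lin_span_rv S" "h \<in> lin_span_rv S"
  shows "(\<lambda>\<omega>. g \<omega> - h \<omega>) \<in> lin_span_rv S"
  using lin_span_add[OF assms(1) lin_span_scale[OF assms(2), of "-1"]] by simp

lemma lin_span_sum:
  "(\<And>i. i \<in> I \<Longrightarrow> f i \<in> lin_span_rv S) \<Longrightarrow> (\<lambda>\<omega>. \<Sum>i\<in>I. f i \<omega>) \<in> lin_span_rv S"
proof (induction I rule: infinite_finite_induct)
  case (infinite A) thus ?case by (simp add: lin_span_zero)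
next
  case empty thus ?case by (simp add: lin_span_zero)
next
  case (insert a A) thus ?case by (simp add: lin_span_add)
qed

lemma lin_span_L2:
  assumes "S \<subseteq> L2rv M" "h \<in> lin_span_rv S"
  shows "h \<in> L2rv M"
proof -
  obtain F c where F: "finite F" "F \<subseteq> S" "h = (\<lambda>\<omega>. \<Sum>f\<in>F. c f * f \<omega>)"
    using assms(2) by (rule lin_span_obtain)
  have "\<And>f. f \<in> F \<Longrightarrow> f \<in> L2rv M" using F(2) assms(1) by blast
  hence "(\<lambda>\<omega>. \<Sum>f\<in>F. c f * f \<omega>) \<in> L2rv M" by (intro L2_sum L2_scale)
  thus ?thesis using F(3) by simp
qed


lemma fact_ineq1: "fact (Suc n) * fact (Suc m) \<le> (fact (m + n + 1) :: nat)"
proof (induction m)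
  case 0 thus ?case by simp
next
  case (Suc m)
  have "fact (Suc n) * fact (Suc (Suc m)) = (fact (Suc n) * fact (Suc m)) * (Suc (Suc m))"
    by (simp only: of_nat_id fact_Suc[of "Suc m"] mult.commute mult.left_commute)
  also have "\<dots> \<le> fact (m + n + 1) * (Suc (m + n + 1))"
    by (rule mult_le_mono[OF Suc.IH]) simp
  also have "\<dots> = fact (Suc m + n + 1)" by (simp only: of_nat_id fact_Suc mult.commute add_Suc)
  finally show ?case .
qed

lemma fact_ineq2: "fact (Suc (Suc (Suc n))) * fact (Suc (Suc (Suc j))) \<le> 6 * (fact (Suc (Suc (Suc (j + n)))) :: nat)"
proof (induction j)
  case 0 
  have "fact (Suc (Suc (Suc 0))) = (6::nat)" by (simp add: numeral_eq_Suc)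
  thus ?case by simp
next
  case (Suc j)
  have "fact (Suc (Suc (Suc n))) * fact (Suc (Suc (Suc (Suc j)))) = (fact (Suc (Suc (Suc n))) * fact (Suc (Suc (Suc j)))) * Suc (Suc (Suc (Suc j)))"
    by (simp only: of_nat_id fact_Suc[of "Suc (Suc (Suc j))"] mult.commute mult.left_commute)
  also have "\<dots> \<le> (6 * fact (Suc (Suc (Suc (j + n))))) * Suc (Suc (Suc (Suc (j + n))))"
    by (rule mult_le_mono[OF Suc.IH]) simp
  also have "\<dots> = 6 * fact (Suc (Suc (Suc (Suc j + n))))" by (simp only: of_nat_id fact_Suc[of "Suc (Suc (Suc (j + n)))"] mult.commute mult.left_commute add_Suc)
  finally show ?case .
qed


lemma alg1: fixes F fn fa a n :: real assumes "F > 0" "a \<ge> 0" "n \<ge> 0"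
  shows "fn * fa / F - fn * ((a + 1) * fa) / ((a + n + 2) * F) = (n + 1) * fn * fa / ((a + n + 2) * F)"
proof -
  have s: "a + n + 2 > 0" using assms by simp
  have "fn * fa / F = (a + n + 2) * (fn * fa) / ((a + n + 2) * F)" using s assms(1) by simp
  thus ?thesis by (simp add: diff_divide_distrib[symmetric] algebra_simps)
qed
lemma alg2: fixes F fn fm n m :: real assumes "F > 0" "n \<ge> 0" "m \<ge> 0"
  "fn * fm * ((n + 1) * (m + 1)) \<le> F"
  shows "fn * fm / F \<le> 1 / ((n + 1) * (m + 1))"
proof -
  have p: "(n + 1) * (m + 1) > 0" using assms by simp
  have "fn * fm \<le> F / ((n + 1) * (m + 1))" using assms(4) p by (simp add: pos_le_divide_eq)
  hence "fn * fm / F \<le> (F / ((n + 1) * (m + 1))) / F" by (rule divide_right_mono) (use assms(1) in simp)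
  also have "\<dots> = 1 / ((n + 1) * (m + 1))" using assms(1) by simp
  finally show ?thesis .
qed

definition beta :: "nat \<Rightarrow> nat \<Rightarrow> real" where
  "beta n a = fact n * fact a / fact (a + n + 1)"

lemma beta_0: "beta 0 a = 1 / (real a + 1)"
proof -
  have e: "(fact (a + 0 + 1) :: real) = (real a + 1) * fact a" by simp
  have p: "(fact a :: real) > 0" by simp
  show ?thesis unfolding beta_def e using p by simp
qed

lemma beta_rec: "beta n a - beta n (Suc a) = beta (Suc n) a"
proof -
  have f1: "(fact (Suc a) :: real) = (real a + 1) * fact a" by simp
  have f2: "(fact (Suc a + n + 1) :: real) = (real a + real n + 2) * fact (a + n + 1)"
  proof -
    have "Suc a + n + 1 = Suc (a + n + 1)" by simp
    hence "(fact (Suc a + n + 1) :: real) = real (Suc (a + n + 1)) * fact (a + n + 1)"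
      by (simp only: fact_Suc)
    thus ?thesis by simp
  qed
  have f3: "(fact (a + Suc n + 1) :: real) = (real a + real n + 2) * fact (a + n + 1)"
  proof -
    have "a + Suc n + 1 = Suc a + n + 1" by simp
    thus ?thesis using f2 by simp
  qed
  have f4: "(fact (Suc n) :: real) = (real n + 1) * fact n" by simp
  have pos: "(fact (a + n + 1) :: real) > 0" by simp
  have "beta n a - beta n (Suc a) = fact n * fact a / fact (a + n + 1) - fact n * ((real a + 1) * fact a) / ((real a + real n + 2) * fact (a + n + 1))"
    unfolding beta_def by (simp only: f1 f2)
  also have "\<dots> = (real n + 1) * fact n * fact a / ((real a + real n + 2) * fact (a + n + 1))"
    by (rule alg1[OF pos]) auto
  also have "\<dots> = beta (Suc n) a"
    unfolding beta_def by (simp only: f3 f4)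
  finally show ?thesis .
qed

lemma beta_bound: "beta n m \<le> 1 / ((real n + 1) * (real m + 1))"
proof -
  have "real (fact (Suc n) * fact (Suc m)) \<le> real (fact (m + n + 1))"
    using fact_ineq1[of n m] by (simp only: of_nat_le_iff)
  hence "(fact (Suc n) :: real) * fact (Suc m) \<le> fact (m + n + 1)"
    by (simp only: of_nat_mult of_nat_fact)
  hence "fact n * fact m * ((real n + 1) * (real m + 1)) \<le> (fact (m + n + 1) :: real)"
    by (simp only: fact_Suc of_nat_Suc) (simp add: algebra_simps)
  thus ?thesis unfolding beta_def
    by (rule alg2[rotated 3]) auto
qed

lemma beta_nonneg: "beta n m \<ge> 0"
  by (simp add: beta_def)

lemma beta_w0: "(real n + 1) * (real n + 2) * beta n 1 = 1"
proof -
  have e: "(fact (1 + n + 1) :: real) = (real n + 1) * (real n + 2) * fact n"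
  proof -
    have "1 + n + 1 = Suc (Suc n)" by simp
    hence "(fact (1 + n + 1) :: real) = real (Suc (Suc n)) * (real (Suc n) * fact n)"
      by (simp only: fact_Suc)
    thus ?thesis by (simp add: algebra_simps)
  qed
  have p: "(fact n :: real) > 0" "(real n + 1) * (real n + 2) > 0" by auto
  show ?thesis unfolding beta_def e using p by simp
qed

lemma alg3: fixes A F p q :: real assumes "F > 0" "A \<ge> 0" "A * p \<le> 6 * F" "q > 0" "q \<le> p"
  shows "A / F \<le> 6 / q"
proof -
  have "A * q \<le> A * p" using assms by (intro mult_left_mono) auto
  hence "A * q \<le> 6 * F" using assms(3) by linarith
  hence "A \<le> 6 * F / q" using assms(4) by (simp add: pos_le_divide_eq)
  hence "A / F \<le> (6 * F / q) / F" by (rule divide_right_mono) (use assms(1) in simp)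
  also have "\<dots> = 6 / q" using assms(1) by simp
  finally show ?thesis .
qed

lemma beta_w0_bound: "(real n + 1) * (real n + 2) * beta n (Suc (Suc j)) \<le> 6 / ((real n + 1) * (real j + 2))"
proof -
  define F :: real where "F = fact (Suc (Suc (Suc (j + n))))"
  define A :: real where "A = fact (Suc (Suc n)) * fact (Suc (Suc j))"
  have e1: "(real n + 1) * (real n + 2) * beta n (Suc (Suc j)) = A / F"
  proof -
    have "Suc (Suc j) + n + 1 = Suc (Suc (Suc (j + n)))" by simp
    hence "beta n (Suc (Suc j)) = fact n * fact (Suc (Suc j)) / F" unfolding beta_def F_def by simp
    moreover have "(fact (Suc (Suc n)) :: real) = (real n + 1) * (real n + 2) * fact n"
      by (simp only: fact_Suc of_nat_Suc) (simp add: algebra_simps)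
    ultimately show ?thesis unfolding A_def by (simp add: algebra_simps)
  qed
  have "real (fact (Suc (Suc (Suc n))) * fact (Suc (Suc (Suc j)))) \<le> real (6 * fact (Suc (Suc (Suc (j + n)))))"
    using fact_ineq2[of n j] by (simp only: of_nat_le_iff)
  hence "(fact (Suc (Suc (Suc n))) :: real) * fact (Suc (Suc (Suc j))) \<le> 6 * F"
    unfolding F_def by (simp only: of_nat_mult of_nat_fact of_nat_numeral)
  hence i: "A * ((real n + 3) * (real j + 3)) \<le> 6 * F"
    unfolding A_def by (simp only: fact_Suc[of "Suc (Suc n)"] fact_Suc[of "Suc (Suc j)"] of_nat_Suc) (simp add: algebra_simps)
  have "A / F \<le> 6 / ((real n + 1) * (real j + 2))"
    by (rule alg3[OF _ _ i]) (auto simp: F_def A_def intro: mult_mono)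
  thus ?thesis using e1 by simp
qed


lemma sum_split_identity:
  fixes g :: "nat \<Rightarrow> real"
  shows "g 0 + (\<Sum>l=1..L+k. g l) = (\<Sum>l<k. g l) + (\<Sum>m\<le>L. g (m + k))"
proof -
  have "g 0 + (\<Sum>l=1..L+k. g l) = (\<Sum>l=0..L+k. g l)"
    by (simp add: sum.atLeast_Suc_atMost)
  also have "{0..L+k} = {..<k} \<union> {k..L+k}" by auto
  also have "(\<Sum>l\<in>{..<k} \<union> {k..L+k}. g l) = (\<Sum>l<k. g l) + (\<Sum>l=k..L+k. g l)"
    by (rule sum.union_disjoint) auto
  also have "(\<Sum>l=k..L+k. g l) = (\<Sum>m=0..L. g (m + k))"
    using sum.shift_bounds_cl_nat_ivl[of g 0 k L] by simp
  also have "{0..L} = {..L}" by auto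
  finally show ?thesis .
qed

lemma two_ne_one: "(2::2) \<noteq> 1" by simp

lemma quad_form:
  fixes E :: "'a \<Rightarrow> real^2" and z :: "real^2"
  assumes e1: "(\<lambda>\<omega>. E \<omega> $ 1) \<in> L2rv M" and e2: "(\<lambda>\<omega>. E \<omega> $ 2) \<in> L2rv M"
  shows "z \<bullet> ((\<chi> i j. \<integral>\<omega>. E \<omega> $ i * E \<omega> $ j \<partial>M) *v z) = (\<integral>\<omega>. (z$1 * E \<omega> $ 1 + z$2 * E \<omega> $ 2)^2 \<partial>M)"
proof -
  define A11 where "A11 = (\<integral>\<omega>. E \<omega> $ 1 * E \<omega> $ 1 \<partial>M)"
  define A12 where "A12 = (\<integral>\<omega>. E \<omega> $ 1 * E \<omega> $ 2 \<partial>M)"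
  define A21 where "A21 = (\<integral>\<omega>. E \<omega> $ 2 * E \<omega> $ 1 \<partial>M)"
  define A22 where "A22 = (\<integral>\<omega>. E \<omega> $ 2 * E \<omega> $ 2 \<partial>M)"
  have A21: "A21 = A12" unfolding A21_def A12_def by (simp add: mult.commute)
  have i11: "integrable M (\<lambda>\<omega>. E \<omega> $ 1 * E \<omega> $ 1)" by (rule L2_mult_int[OF e1 e1])
  have i12: "integrable M (\<lambda>\<omega>. E \<omega> $ 1 * E \<omega> $ 2)" by (rule L2_mult_int[OF e1 e2])
  have i22: "integrable M (\<lambda>\<omega>. E \<omega> $ 2 * E \<omega> $ 2)" by (rule L2_mult_int[OF e2 e2])
  have lhs: "z \<bullet> ((\<chi> i j. \<integral>\<omega>. E \<omega> $ i * E \<omega> $ j \<partial>M) *v z) = z$1 * (A11 * z$1 + A12 * z$2) + z$2 * (A21 * z$1 + A22 * z$2)"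
    unfolding inner_vec_def matrix_vector_mult_def A11_def A12_def A21_def A22_def
    by (simp add: sum_2)
  have "(\<lambda>\<omega>. (z$1 * E \<omega> $ 1 + z$2 * E \<omega> $ 2)^2) = (\<lambda>\<omega>. (z$1 * z$1) * (E \<omega> $ 1 * E \<omega> $ 1) + (2 * z$1 * z$2) * (E \<omega> $ 1 * E \<omega> $ 2) + (z$2 * z$2) * (E \<omega> $ 2 * E \<omega> $ 2))"
    by (simp add: power2_eq_square algebra_simps)
  hence "(\<integral>\<omega>. (z$1 * E \<omega> $ 1 + z$2 * E \<omega> $ 2)^2 \<partial>M) = (z$1 * z$1) * A11 + (2 * z$1 * z$2) * A12 + (z$2 * z$2) * A22"
    unfolding A11_def A12_def A22_def using i11 i12 i22 by simp
  thus ?thesis unfolding lhs A21 by (simp add: algebra_simps)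
qed

lemma ones_form: "z \<bullet> (((\<chi> i j. 1) :: real^2^2) *v z) = (z$1 + z$2)^2"
  unfolding inner_vec_def matrix_vector_mult_def by (simp add: sum_2 power2_eq_square algebra_simps)

lemma ones_sym: "symmetric_mat (\<chi> i j. 1)"
  unfolding symmetric_mat_def transpose_def by (simp add: vec_eq_iff)

lemma zero_sym: "symmetric_mat 0"
  unfolding symmetric_mat_def transpose_def by (simp add: vec_eq_iff)

lemma ortho_approx:
  assumes v: "v \<in> L2rv M" and g: "g \<in> L2rv M"
    and ap: "\<And>e. e > 0 \<Longrightarrow> \<exists>f. f \<in> L2rv M \<and> (\<integral>\<omega>. v \<omega> * f \<omega> \<partial>M) = 0 \<and> (\<integral>\<omega>. (g \<omega> - f \<omega>)^2 \<partial>M) < e"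
  shows "(\<integral>\<omega>. v \<omega> * g \<omega> \<partial>M) = 0"
proof (rule ccontr)
  define t where "t = \<bar>\<integral>\<omega>. v \<omega> * g \<omega> \<partial>M\<bar>"
  assume "(\<integral>\<omega>. v \<omega> * g \<omega> \<partial>M) \<noteq> 0"
  hence t: "t > 0" unfolding t_def by simp
  define V where "V = (\<integral>\<omega>. (v \<omega>)^2 \<partial>M)"
  have V: "V \<ge> 0" unfolding V_def by simp
  define \<delta> where "\<delta> = t / (V + 1)"
  have d: "\<delta> > 0" unfolding \<delta>_def using t V by simp
  have dV: "\<delta> * V < t"
  proof -
    have "\<delta> * V = t * (V / (V + 1))" unfolding \<delta>_def by simp
    also have "\<dots> < t * 1" using t V by (intro mult_strict_left_mono) auto
    finally show ?thesis by simp
  qed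
  obtain f where f: "f \<in> L2rv M" "(\<integral>\<omega>. v \<omega> * f \<omega> \<partial>M) = 0" "(\<integral>\<omega>. (g \<omega> - f \<omega>)^2 \<partial>M) < \<delta> * t"
    using ap[of "\<delta> * t"] d t by auto
  define r where "r = (\<lambda>\<omega>. g \<omega> - f \<omega>)"
  have r: "r \<in> L2rv M" unfolding r_def by (rule L2_diff[OF g f(1)])
  have ivr: "integrable M (\<lambda>\<omega>. v \<omega> * r \<omega>)" by (rule L2_mult_int[OF v r])
  have ivg: "integrable M (\<lambda>\<omega>. v \<omega> * g \<omega>)" by (rule L2_mult_int[OF v g])
  have ivf: "integrable M (\<lambda>\<omega>. v \<omega> * f \<omega>)" by (rule L2_mult_int[OF v f(1)])
  have "(\<integral>\<omega>. v \<omega> * r \<omega> \<partial>M) = (\<integral>\<omega>. v \<omega> * g \<omega> - v \<omega> * f \<omega> \<partial>M)"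
    unfolding r_def by (simp add: algebra_simps)
  also have "\<dots> = (\<integral>\<omega>. v \<omega> * g \<omega> \<partial>M)" using ivg ivf f(2) by simp
  finally have eq: "(\<integral>\<omega>. v \<omega> * r \<omega> \<partial>M) = (\<integral>\<omega>. v \<omega> * g \<omega> \<partial>M)" .
  have "t \<le> (\<integral>\<omega>. \<bar>v \<omega> * r \<omega>\<bar> \<partial>M)"
    unfolding t_def eq[symmetric] using integral_norm_bound[of M "\<lambda>\<omega>. v \<omega> * r \<omega>"] by simp
  hence "2 * \<delta> * t \<le> 2 * \<delta> * (\<integral>\<omega>. \<bar>v \<omega> * r \<omega>\<bar> \<partial>M)" using d by simp
  also have "\<dots> = (\<integral>\<omega>. 2 * \<bar>(\<delta> * v \<omega>) * r \<omega>\<bar> \<partial>M)"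
    using d by (simp add: abs_mult mult.assoc)
  also have "\<dots> \<le> (\<integral>\<omega>. (\<delta> * v \<omega>)^2 + (r \<omega>)^2 \<partial>M)"
  proof (rule integral_mono)
    show "integrable M (\<lambda>\<omega>. 2 * \<bar>(\<delta> * v \<omega>) * r \<omega>\<bar>)"
      using integrable_abs[OF ivr] by (simp add: abs_mult mult.assoc)
    show "integrable M (\<lambda>\<omega>. (\<delta> * v \<omega>)^2 + (r \<omega>)^2)"
      using v r by (simp add: power_mult_distrib L2rv_int)
    show "\<And>\<omega>. \<omega> \<in> space M \<Longrightarrow> 2 * \<bar>(\<delta> * v \<omega>) * r \<omega>\<bar> \<le> (\<delta> * v \<omega>)^2 + (r \<omega>)^2"
      by (rule amgm_abs)
  qed
  also have "\<dots> = \<delta>^2 * V + (\<integral>\<omega>. (r \<omega>)^2 \<partial>M)"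
    using v r unfolding V_def by (simp add: power_mult_distrib L2rv_int)
  also have "\<dots> < \<delta>^2 * V + \<delta> * t" using f(3) unfolding r_def by simp
  finally have "2 * \<delta> * t < \<delta> * (\<delta> * V) + \<delta> * t" by (simp add: power2_eq_square algebra_simps)
  hence "\<delta> * t < \<delta> * (\<delta> * V)" by simp
  hence "t < \<delta> * V" using d by simp
  thus False using dV by simp
qed


locale gsetting = prob_space M for M :: "'a measure" +
  fixes w x :: "int \<Rightarrow> 'a \<Rightarrow> real"
  assumes gauss: "\<And>k. distributed M lborel (w k) std_normal_density"
    and indep: "indep_vars (\<lambda>_. borel) w UNIV"
    and x_L2: "\<And>k. x k \<in> L2rv M"
    and x_series: "\<And>k. (\<lambda>n. \<integral>\<omega>. (x k \<omega> - (w k \<omega> +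
            (\<Sum>l=1..n. w (k - int l) \<omega> / (1 + real l))))^2 \<partial>M) \<longlonglongrightarrow> 0"
begin

lemma w_meas: "w k \<in> borel_measurable M"
  using distributed_measurable[OF gauss[of k]] by simp

lemma w_int: "integrable M (w k)"
proof -
  have "integrable lborel (\<lambda>x. std_normal_density x * x)"
    using integrable_std_normal_moment[of 1] by simp
  thus ?thesis
    using distributed_integrable[OF gauss[of k], of "\<lambda>x. x"] by (simp add: normal_density_nonneg)
qed

lemma w_sq_int: "integrable M (\<lambda>\<omega>. (w k \<omega>)^2)"
proof -
  have "integrable lborel (\<lambda>x. std_normal_density x * x^2)"
    using integrable_std_normal_moment[of 2] by simp
  thus ?thesis
    using distributed_integrable[OF gauss[of k], of "\<lambda>x. x^2"] by (simp add: normal_density_nonneg)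
qed

lemma w_L2: "w k \<in> L2rv M"
  by (rule L2rvI[OF w_meas w_sq_int])

lemma w_mean: "(\<integral>\<omega>. w k \<omega> \<partial>M) = 0"
  using standard_normal_distributed_expectation[OF gauss[of k]] by simp

lemma w_var: "(\<integral>\<omega>. (w k \<omega>)^2 \<partial>M) = 1"
  using standard_normal_distributed_variance[OF gauss[of k]] w_mean[of k] by simp

lemma w_cov: "(\<integral>\<omega>. w i \<omega> * w j \<omega> \<partial>M) = (if i = j then 1 else 0)"
proof (cases "i = j")
  case True thus ?thesis using w_var[of j] by (simp add: power2_eq_square)
next
  case False
  have ind: "indep_vars (\<lambda>_. borel) w {i, j}"
    by (rule indep_vars_subset[OF indep]) auto
  have "(\<integral>\<omega>. (\<Prod>t\<in>{i,j}. w t \<omega>) \<partial>M) = (\<Prod>t\<in>{i,j}. \<integral>\<omega>. w t \<omega> \<partial>M)"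
    by (rule indep_vars_lebesgue_integral[OF _ ind]) (auto simp: w_int)
  thus ?thesis using False by (simp add: w_mean)
qed

lemma w_sum_L2: "(\<lambda>\<omega>. \<Sum>m\<in>F. a m * w (\<phi> m) \<omega>) \<in> L2rv M"
  by (intro L2_sum L2_scale w_L2)

lemma orthonormal_sum:
  assumes "finite F" "inj_on \<phi> F"
  shows "(\<integral>\<omega>. (\<Sum>m\<in>F. a m * w (\<phi> m) \<omega>)^2 \<partial>M) = (\<Sum>m\<in>F. (a m)^2)"
proof -
  have "(\<integral>\<omega>. (\<Sum>m\<in>F. a m * w (\<phi> m) \<omega>)^2 \<partial>M)
      = (\<integral>\<omega>. (\<Sum>m\<in>F. \<Sum>n\<in>F. (a m * a n) * (w (\<phi> m) \<omega> * w (\<phi> n) \<omega>)) \<partial>M)"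
    by (simp add: power2_eq_square sum_product algebra_simps)
  also have "\<dots> = (\<Sum>m\<in>F. \<Sum>n\<in>F. (a m * a n) * (\<integral>\<omega>. w (\<phi> m) \<omega> * w (\<phi> n) \<omega> \<partial>M))"
    by (simp add: Bochner_Integration.integral_sum L2_mult_int w_L2)
  also have "\<dots> = (\<Sum>m\<in>F. \<Sum>n\<in>F. (a m * a n) * (if m = n then 1 else 0))"
    apply (intro sum.cong refl)
    using assms(2) by (auto simp: w_cov inj_on_def)
  also have "\<dots> = (\<Sum>m\<in>F. (a m)^2)"
    using assms(1) by (simp add: power2_eq_square if_distrib cong: if_cong)
  finally show ?thesis .
qed

definition P :: "(nat \<Rightarrow> real) \<Rightarrow> nat \<Rightarrow> 'a \<Rightarrow> real" where
  "P a L = (\<lambda>\<omega>. \<Sum>m\<le>L. a m * w (- int m) \<omega>)"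

lemma P_L2: "P a L \<in> L2rv M"
  unfolding P_def by (rule w_sum_L2)

lemma P_sq: "(\<integral>\<omega>. (P a L \<omega>)^2 \<partial>M) = (\<Sum>m\<le>L. (a m)^2)"
  unfolding P_def by (rule orthonormal_sum) (auto simp: inj_on_def)

definition rep :: "('a \<Rightarrow> real) \<Rightarrow> (nat \<Rightarrow> real) \<Rightarrow> bool" where
  "rep g a \<longleftrightarrow> g \<in> L2rv M \<and> (\<lambda>L. \<integral>\<omega>. (g \<omega> - P a L \<omega>)^2 \<partial>M) \<longlonglongrightarrow> 0"

lemma rep_diff:
  assumes "rep g a" "rep h b"
  shows "rep (\<lambda>\<omega>. g \<omega> - h \<omega>) (\<lambda>m. a m - b m)"
proof -
  have g: "g \<in> L2rv M" and h: "h \<in> L2rv M" using assms by (auto simp: rep_def)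
  have eq: "(\<lambda>\<omega>. (g \<omega> - h \<omega> - P (\<lambda>m. a m - b m) L \<omega>)^2) = (\<lambda>\<omega>. ((g \<omega> - P a L \<omega>) + (P b L \<omega> - h \<omega>))^2)" for L
    by (auto simp: P_def algebra_simps sum_subtractf)
  have bd: "norm (\<integral>\<omega>. (g \<omega> - h \<omega> - P (\<lambda>m. a m - b m) L \<omega>)^2 \<partial>M)
      \<le> 2 * (\<integral>\<omega>. (g \<omega> - P a L \<omega>)^2 \<partial>M) + 2 * (\<integral>\<omega>. (h \<omega> - P b L \<omega>)^2 \<partial>M)" for L
  proof -
    have "norm (\<integral>\<omega>. (g \<omega> - h \<omega> - P (\<lambda>m. a m - b m) L \<omega>)^2 \<partial>M)
        = (\<integral>\<omega>. ((g \<omega> - P a L \<omega>) + (P b L \<omega> - h \<omega>))^2 \<partial>M)"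
      by (simp only: eq abs_of_nonneg[OF Bochner_Integration.integral_nonneg[OF zero_le_power2]] real_norm_def)
    also have "\<dots> \<le> 2 * (\<integral>\<omega>. (g \<omega> - P a L \<omega>)^2 \<partial>M) + 2 * (\<integral>\<omega>. (P b L \<omega> - h \<omega>)^2 \<partial>M)"
      by (intro L2_sq_le L2_diff g h P_L2)
    also have "(\<lambda>\<omega>. (P b L \<omega> - h \<omega>)^2) = (\<lambda>\<omega>. (h \<omega> - P b L \<omega>)^2)"
      by (simp add: power2_commute)
    finally show ?thesis .
  qed
  have "(\<lambda>L. 2 * (\<integral>\<omega>. (g \<omega> - P a L \<omega>)^2 \<partial>M) + 2 * (\<integral>\<omega>. (h \<omega> - P b L \<omega>)^2 \<partial>M)) \<longlonglongrightarrow> 2 * 0 + 2 * 0"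
    using assms unfolding rep_def by (intro tendsto_intros) auto
  hence lim: "(\<lambda>L. 2 * (\<integral>\<omega>. (g \<omega> - P a L \<omega>)^2 \<partial>M) + 2 * (\<integral>\<omega>. (h \<omega> - P b L \<omega>)^2 \<partial>M)) \<longlonglongrightarrow> 0"
    by simp
  have "(\<lambda>L. \<integral>\<omega>. (g \<omega> - h \<omega> - P (\<lambda>m. a m - b m) L \<omega>)^2 \<partial>M) \<longlonglongrightarrow> 0"
    by (rule Lim_null_comparison[OF _ lim]) (rule always_eventually, rule allI, rule bd)
  thus ?thesis using g h by (simp add: rep_def L2_diff)
qed

lemma rep_scale:
  assumes "rep g a"
  shows "rep (\<lambda>\<omega>. c * g \<omega>) (\<lambda>m. c * a m)"
proof -
  have g: "g \<in> L2rv M" using assms by (auto simp: rep_def)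
  have eq: "(\<integral>\<omega>. (c * g \<omega> - P (\<lambda>m. c * a m) L \<omega>)^2 \<partial>M) = c^2 * (\<integral>\<omega>. (g \<omega> - P a L \<omega>)^2 \<partial>M)" for L
  proof -
    have "(\<lambda>\<omega>. (c * g \<omega> - P (\<lambda>m. c * a m) L \<omega>)^2) = (\<lambda>\<omega>. c^2 * (g \<omega> - P a L \<omega>)^2)"
      by (auto simp: P_def algebra_simps power2_eq_square sum_distrib_left)
    thus ?thesis by simp
  qed
  have "(\<lambda>L. c^2 * (\<integral>\<omega>. (g \<omega> - P a L \<omega>)^2 \<partial>M)) \<longlonglongrightarrow> c^2 * 0"
    using assms by (intro tendsto_intros) (auto simp: rep_def)
  thus ?thesis using g by (simp add: rep_def eq L2_scale)
qed

lemma rep_bound: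
  assumes "rep g a" "summable (\<lambda>m. (a m)^2)"
  shows "(\<integral>\<omega>. (g \<omega>)^2 \<partial>M) \<le> 2 * (\<Sum>m. (a m)^2)"
proof -
  have g: "g \<in> L2rv M" using assms by (auto simp: rep_def)
  have b: "(\<integral>\<omega>. (g \<omega>)^2 \<partial>M) \<le> 2 * (\<integral>\<omega>. (g \<omega> - P a L \<omega>)^2 \<partial>M) + 2 * (\<Sum>m. (a m)^2)" for L
  proof -
    have "(\<integral>\<omega>. (g \<omega>)^2 \<partial>M) = (\<integral>\<omega>. ((g \<omega> - P a L \<omega>) + P a L \<omega>)^2 \<partial>M)" by simp
    also have "\<dots> \<le> 2 * (\<integral>\<omega>. (g \<omega> - P a L \<omega>)^2 \<partial>M) + 2 * (\<integral>\<omega>. (P a L \<omega>)^2 \<partial>M)"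
      by (intro L2_sq_le L2_diff g P_L2)
    also have "(\<integral>\<omega>. (P a L \<omega>)^2 \<partial>M) \<le> (\<Sum>m. (a m)^2)"
      unfolding P_sq by (rule sum_le_suminf[OF assms(2)]) auto
    finally show ?thesis by simp
  qed
  have "(\<lambda>L. 2 * (\<integral>\<omega>. (g \<omega> - P a L \<omega>)^2 \<partial>M) + 2 * (\<Sum>m. (a m)^2)) \<longlonglongrightarrow> 2 * 0 + 2 * (\<Sum>m. (a m)^2)"
    using assms by (intro tendsto_intros) (auto simp: rep_def)
  from LIMSEQ_le_const[OF this] b show ?thesis by auto
qed

lemma rep_bound2:
  assumes "rep g a" "\<And>m. (a m)^2 \<le> K * (1 / (real m + 1)^2)"
  shows "(\<integral>\<omega>. (g \<omega>)^2 \<partial>M) \<le> 2 * K * (\<Sum>m. 1 / (real m + 1)^2)"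
proof -
  have sK: "summable (\<lambda>m. K * (1 / (real m + 1)^2))" by (intro summable_mult summable_inv_sq)
  have s: "summable (\<lambda>m. (a m)^2)"
    by (rule summable_comparison_test[OF _ sK]) (use assms(2) in auto)
  have "(\<Sum>m. (a m)^2) \<le> (\<Sum>m. K * (1 / (real m + 1)^2))"
    by (rule suminf_le[OF assms(2) s sK])
  also have "\<dots> = K * (\<Sum>m. 1 / (real m + 1)^2)" by (rule suminf_mult[OF summable_inv_sq])
  finally show ?thesis using rep_bound[OF assms(1) s] by simp
qed

lemma rep_cong: "rep g a \<Longrightarrow> (\<And>m. a m = b m) \<Longrightarrow> rep g b"
  by (metis ext)

definition U :: "nat \<Rightarrow> 'a \<Rightarrow> real" where
  "U k = (\<lambda>\<omega>. x (int k) \<omega> - (\<Sum>l<k. w (int k - int l) \<omega> / (1 + real l)))"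

lemma U_L2: "U k \<in> L2rv M"
  unfolding U_def by (intro L2_diff x_L2 L2_sum) (simp add: divide_inverse mult.commute[of _ "inverse _"] L2_scale w_L2)

lemma rep_U: "rep (U k) (\<lambda>m. 1 / (real k + real m + 1))"
proof -
  have eq: "(\<integral>\<omega>. (U k \<omega> - P (\<lambda>m. 1 / (real k + real m + 1)) L \<omega>)^2 \<partial>M)
     = (\<integral>\<omega>. (x (int k) \<omega> - (w (int k) \<omega> + (\<Sum>l=1..L+k. w (int k - int l) \<omega> / (1 + real l))))^2 \<partial>M)" for L
  proof -
    have "U k \<omega> - P (\<lambda>m. 1 / (real k + real m + 1)) L \<omega>
        = x (int k) \<omega> - (w (int k) \<omega> + (\<Sum>l=1..L+k. w (int k - int l) \<omega> / (1 + real l)))" for \<omega>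
    proof -
      have "w (int k) \<omega> + (\<Sum>l=1..L+k. w (int k - int l) \<omega> / (1 + real l))
          = (\<Sum>l<k. w (int k - int l) \<omega> / (1 + real l)) + (\<Sum>m\<le>L. w (int k - int (m + k)) \<omega> / (1 + real (m + k)))"
        using sum_split_identity[of "\<lambda>l. w (int k - int l) \<omega> / (1 + real l)" L k] by simp
      also have "(\<Sum>m\<le>L. w (int k - int (m + k)) \<omega> / (1 + real (m + k))) = P (\<lambda>m. 1 / (real k + real m + 1)) L \<omega>"
        unfolding P_def by (intro sum.cong refl) (simp add: algebra_simps)
      finally show ?thesis unfolding U_def by simp
    qed
    thus ?thesis by simp
  qed
  have "(\<lambda>L. \<integral>\<omega>. (x (int k) \<omega> - (w (int k) \<omega> + (\<Sum>l=1..L+k. w (int k - int l) \<omega> / (1 + real l))))^2 \<partial>M) \<longlonglongrightarrow> 0"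
    using LIMSEQ_ignore_initial_segment[OF x_series[of "int k"], of k] by simp
  thus ?thesis unfolding rep_def eq using U_L2 by simp
qed

primrec V :: "nat \<Rightarrow> nat \<Rightarrow> 'a \<Rightarrow> real" where
  "V 0 k = U k"
| "V (Suc n) k = (\<lambda>\<omega>. V n k \<omega> - V n (Suc k) \<omega>)"

lemma rep_V: "rep (V n k) (\<lambda>m. beta n (m + k))"
proof (induction n arbitrary: k)
  case 0
  show ?case unfolding V.simps by (rule rep_cong[OF rep_U]) (simp add: beta_0 algebra_simps)
next
  case (Suc n)
  show ?case
    unfolding V.simps by (rule rep_cong[OF rep_diff[OF Suc.IH[of k] Suc.IH[of "Suc k"]]]) (simp add: beta_rec[symmetric])
qed

lemma rep_w0: "rep (w 0) (\<lambda>m. if m = 0 then 1 else 0)"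
proof -
  have "P (\<lambda>m. if m = 0 then 1 else 0) L = w 0" for L
  proof
    fix \<omega>
    have "P (\<lambda>m. if m = 0 then 1 else 0) L \<omega> = (\<Sum>m\<le>L. if m = 0 then w (- int m) \<omega> else 0)"
      unfolding P_def by (intro sum.cong refl) simp
    also have "\<dots> = w 0 \<omega>" by (subst sum.delta) auto
    finally show "P (\<lambda>m. if m = 0 then 1 else 0) L \<omega> = w 0 \<omega>" .
  qed
  thus ?thesis unfolding rep_def using w_L2[of 0] by simp
qed

abbreviation Fut where "Fut \<equiv> {x k | k. k \<ge> 1} \<union> {w k | k. k \<ge> 1}"

lemma w_span_scaled: "j \<ge> 1 \<Longrightarrow> (\<lambda>\<omega>. w j \<omega> / c) \<in> lin_span_rv Fut"
  using lin_span_scale[OF lin_span_base[of "w j" Fut], of "1 / c"] by (auto simp: mult.commute)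

lemma U_span: "k \<ge> 1 \<Longrightarrow> U k \<in> lin_span_rv Fut"
  unfolding U_def
  apply (rule lin_span_diff)
   apply (rule lin_span_base) apply force
  apply (rule lin_span_sum)
  apply (rule w_span_scaled) apply simp
  done

lemma V_span: "k \<ge> 1 \<Longrightarrow> V n k \<in> lin_span_rv Fut"
proof (induction n arbitrary: k)
  case 0 thus ?case by (simp add: U_span)
next
  case (Suc n) thus ?case by (simp add: lin_span_diff)
qed

lemma V0_span: "(\<lambda>\<omega>. V n 0 \<omega> - x 0 \<omega>) \<in> lin_span_rv Fut"
proof (induction n)
  case 0 
  have "(\<lambda>\<omega>. V 0 0 \<omega> - x 0 \<omega>) = (\<lambda>\<omega>. 0)" by (simp add: U_def)
  thus ?case by (simp add: lin_span_zero)
next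
  case (Suc n)
  have "(\<lambda>\<omega>. V (Suc n) 0 \<omega> - x 0 \<omega>) = (\<lambda>\<omega>. (V n 0 \<omega> - x 0 \<omega>) - V n 1 \<omega>)" by auto
  thus ?case using lin_span_diff[OF Suc.IH V_span[of 1 n]] by simp
qed

lemma closed_span_crit:
  assumes T: "T \<in> L2rv M" and B: "B \<ge> 0"
    and h: "\<And>n. \<exists>h\<in>lin_span_rv S. (\<integral>\<omega>. (T \<omega> - h \<omega>)^2 \<partial>M) \<le> B / (real n + 1)^2"
  shows "T \<in> closed_span_L2 M S"
  unfolding closed_span_L2_def
proof (intro CollectI conjI allI impI T)
  fix e :: real assume e: "e > 0"
  obtain n :: nat where n: "B / e < real n" using reals_Archimedean2 by blast
  from h[of n] obtain hh where hh: "hh \<in> lin_span_rv S" "(\<integral>\<omega>. (T \<omega> - hh \<omega>)^2 \<partial>M) \<le> B / (real n + 1)^2"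
    by blast
  have "B / (real n + 1)^2 \<le> B / (real n + 1)"
    using B by (intro divide_left_mono) (auto simp: power2_eq_square)
  also have "B / (real n + 1) < e"
    using n e by (simp add: divide_less_eq field_simps)
  finally show "\<exists>h\<in>lin_span_rv S. (\<integral>\<omega>. (T \<omega> - h \<omega>)^2 \<partial>M) < e"
    using hh by force
qed

lemma C_nonneg: "(\<Sum>m. 1 / (real m + 1)^2) \<ge> 0"
  by (rule suminf_nonneg[OF summable_inv_sq]) simp

lemma x0_fut: "x 0 \<in> closed_span_L2 M Fut"
proof (rule closed_span_crit[OF x_L2 _])
  show "0 \<le> 2 * (\<Sum>m. 1 / (real m + 1)^2)" using C_nonneg by simp
next
  fix n
  let ?h = "\<lambda>\<omega>. (-1) * (V n 0 \<omega> - x 0 \<omega>)"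
  have hs: "?h \<in> lin_span_rv Fut" by (rule lin_span_scale[OF V0_span])
  have eq: "(\<lambda>\<omega>. (x 0 \<omega> - ?h \<omega>)^2) = (\<lambda>\<omega>. (V n 0 \<omega>)^2)" by simp
  have r: "rep (V n 0) (\<lambda>m. beta n m)" using rep_V[of n 0] by simp
  have bd: "(beta n m)^2 \<le> (1 / (real n + 1)^2) * (1 / (real m + 1)^2)" for m
  proof -
    have "(beta n m)^2 \<le> (1 / ((real n + 1) * (real m + 1)))^2"
      by (rule power_mono[OF beta_bound beta_nonneg])
    thus ?thesis by (simp add: power_mult_distrib power_divide)
  qed
  have "(\<integral>\<omega>. (V n 0 \<omega>)^2 \<partial>M) \<le> 2 * (1 / (real n + 1)^2) * (\<Sum>m. 1 / (real m + 1)^2)"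
    by (rule rep_bound2[OF r bd])
  hence "(\<integral>\<omega>. (x 0 \<omega> - ?h \<omega>)^2 \<partial>M) \<le> 2 * (\<Sum>m. 1 / (real m + 1)^2) / (real n + 1)^2"
    unfolding eq by simp
  note ineq = this
  show "\<exists>h\<in>lin_span_rv Fut. (\<integral>\<omega>. (x 0 \<omega> - h \<omega>)^2 \<partial>M) \<le> 2 * (\<Sum>m. 1 / (real m + 1)^2) / (real n + 1)^2"
    by (rule bexI[where x="?h"]) (rule ineq, rule hs)
qed

lemma w0_fut: "w 0 \<in> closed_span_L2 M Fut"
proof (rule closed_span_crit[OF w_L2 _])
  show "0 \<le> 72 * (\<Sum>m. 1 / (real m + 1)^2)" using C_nonneg by simp
next
  fix n
  define c where "c = (real n + 1) * (real n + 2)"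
  let ?h = "\<lambda>\<omega>. c * V n 1 \<omega>"
  have hs: "?h \<in> lin_span_rv Fut" by (rule lin_span_scale[OF V_span]) simp
  have r: "rep (\<lambda>\<omega>. w 0 \<omega> - ?h \<omega>) (\<lambda>m. (if m = 0 then 1 else 0) - c * beta n (m + 1))"
    by (rule rep_diff[OF rep_w0 rep_scale[OF rep_V]])
  have bd: "((if m = 0 then 1 else 0) - c * beta n (m + 1))^2 \<le> (36 / (real n + 1)^2) * (1 / (real m + 1)^2)" for m
  proof (cases m)
    case 0 thus ?thesis using beta_w0[of n] by (simp add: c_def)
  next
    case (Suc j)
    have a: "c * beta n (m + 1) \<le> 6 / ((real n + 1) * (real j + 2))"
      using beta_w0_bound[of n j] Suc by (simp add: c_def)
    have b: "0 \<le> c * beta n (m + 1)" unfolding c_def using beta_nonneg by simp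
    have "((if m = 0 then 1 else 0) - c * beta n (m + 1))^2 = (c * beta n (m + 1))^2"
      using Suc by simp
    also have "\<dots> \<le> (6 / ((real n + 1) * (real j + 2)))^2" by (rule power_mono[OF a b])
    also have "\<dots> = (36 / (real n + 1)^2) * (1 / (real m + 1)^2)"
      using Suc by (simp add: power_mult_distrib power_divide)
    finally show ?thesis .
  qed
  have "(\<integral>\<omega>. (w 0 \<omega> - ?h \<omega>)^2 \<partial>M) \<le> 2 * (36 / (real n + 1)^2) * (\<Sum>m. 1 / (real m + 1)^2)"
    by (rule rep_bound2[OF r bd])
  hence "(\<integral>\<omega>. (w 0 \<omega> - ?h \<omega>)^2 \<partial>M) \<le> 72 * (\<Sum>m. 1 / (real m + 1)^2) / (real n + 1)^2"
    by simp
  note ineq = this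
  show "\<exists>h\<in>lin_span_rv Fut. (\<integral>\<omega>. (w 0 \<omega> - h \<omega>)^2 \<partial>M) \<le> 72 * (\<Sum>m. 1 / (real m + 1)^2) / (real n + 1)^2"
    by (rule bexI[where x="?h"]) (rule ineq, rule hs)
qed

abbreviation Past where "Past \<equiv> {x k | k. k \<le> -1} \<union> {w k | k. k \<le> -1}"

lemma Past_L2: "Past \<subseteq> L2rv M"
  using x_L2 w_L2 by blast

lemma Fut_L2: "Fut \<subseteq> L2rv M"
  using x_L2 w_L2 by blast

lemma closed_span_L2': "g \<in> closed_span_L2 M S \<Longrightarrow> g \<in> L2rv M"
  unfolding closed_span_L2_def by simp

lemma S_part_L2: "(\<lambda>\<omega>. w k \<omega> + (\<Sum>l=1..n. w (k - int l) \<omega> / (1 + real l))) \<in> L2rv M"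
  by (intro L2_add w_L2 L2_sum) (simp add: divide_inverse mult.commute[of _ "inverse _"] L2_scale w_L2)

lemma w0_S_orth:
  assumes "k \<le> -1"
  shows "(\<integral>\<omega>. w 0 \<omega> * (w k \<omega> + (\<Sum>l=1..n. w (k - int l) \<omega> / (1 + real l))) \<partial>M) = 0"
proof -
  have "(\<lambda>\<omega>. w 0 \<omega> * (w k \<omega> + (\<Sum>l=1..n. w (k - int l) \<omega> / (1 + real l))))
      = (\<lambda>\<omega>. w 0 \<omega> * w k \<omega> + (\<Sum>l=1..n. (1 / (1 + real l)) * (w 0 \<omega> * w (k - int l) \<omega>)))"
    by (simp add: distrib_left sum_distrib_left algebra_simps)
  moreover have "(\<integral>\<omega>. w 0 \<omega> * w k \<omega> + (\<Sum>l=1..n. (1 / (1 + real l)) * (w 0 \<omega> * w (k - int l) \<omega>)) \<partial>M)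
      = (\<integral>\<omega>. w 0 \<omega> * w k \<omega> \<partial>M) + (\<Sum>l=1..n. (1 / (1 + real l)) * (\<integral>\<omega>. w 0 \<omega> * w (k - int l) \<omega> \<partial>M))"
    by (simp add: L2_mult_int w_L2 Bochner_Integration.integral_sum)
  moreover have "(\<integral>\<omega>. w 0 \<omega> * w k \<omega> \<partial>M) = 0" using assms by (simp add: w_cov)
  moreover have "(\<integral>\<omega>. w 0 \<omega> * w (k - int l) \<omega> \<partial>M) = 0" for l using assms by (simp add: w_cov)
  ultimately show ?thesis by simp
qed

lemma ortho_x: "k \<le> -1 \<Longrightarrow> (\<integral>\<omega>. w 0 \<omega> * x k \<omega> \<partial>M) = 0"
proof (rule ortho_approx[OF w_L2 x_L2])
  fix e :: real assume k: "k \<le> -1" and e: "e > 0"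
  from order_tendstoD(2)[OF x_series[of k] e] obtain N where
    N: "\<And>n. n \<ge> N \<Longrightarrow> (\<integral>\<omega>. (x k \<omega> - (w k \<omega> + (\<Sum>l=1..n. w (k - int l) \<omega> / (1 + real l))))^2 \<partial>M) < e"
    unfolding eventually_sequentially by blast
  show "\<exists>f. f \<in> L2rv M \<and> (\<integral>\<omega>. w 0 \<omega> * f \<omega> \<partial>M) = 0 \<and> (\<integral>\<omega>. (x k \<omega> - f \<omega>)^2 \<partial>M) < e"
    by (rule exI[of _ "\<lambda>\<omega>. w k \<omega> + (\<Sum>l=1..N. w (k - int l) \<omega> / (1 + real l))"])
       (use S_part_L2 w0_S_orth[OF k] N[of N] in auto)
qed

lemma orth_span: "h \<in> lin_span_rv Past \<Longrightarrow> (\<integral>\<omega>. w 0 \<omega> * h \<omega> \<partial>M) = 0"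
proof -
  assume "h \<in> lin_span_rv Past"
  then obtain F c where F: "finite F" "F \<subseteq> Past" "h = (\<lambda>\<omega>. \<Sum>f\<in>F. c f * f \<omega>)"
    by (rule lin_span_obtain)
  have fL2: "f \<in> L2rv M" if "f \<in> F" for f using that F(2) Past_L2 by blast
  have z: "(\<integral>\<omega>. w 0 \<omega> * f \<omega> \<partial>M) = 0" if "f \<in> F" for f
  proof -
    from that F(2) have "f \<in> Past" by blast
    then consider k where "k \<le> -1" "f = x k" | k where "k \<le> -1" "f = w k" by blast
    thus ?thesis
    proof cases
      case 1 thus ?thesis using ortho_x by simp
    next
      case 2 thus ?thesis by (simp add: w_cov)
    qed
  qed
  have "(\<lambda>\<omega>. w 0 \<omega> * h \<omega>) = (\<lambda>\<omega>. \<Sum>f\<in>F. c f * (w 0 \<omega> * f \<omega>))"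
    unfolding F(3) by (simp add: sum_distrib_left algebra_simps)
  hence "(\<integral>\<omega>. w 0 \<omega> * h \<omega> \<partial>M) = (\<Sum>f\<in>F. c f * (\<integral>\<omega>. w 0 \<omega> * f \<omega> \<partial>M))"
    by (simp add: Bochner_Integration.integral_sum L2_mult_int[OF w_L2 fL2])
  also have "\<dots> = 0" using z by simp
  finally show ?thesis .
qed

lemma orth_closed: "g \<in> closed_span_L2 M Past \<Longrightarrow> (\<integral>\<omega>. w 0 \<omega> * g \<omega> \<partial>M) = 0"
proof (rule ortho_approx[OF w_L2 closed_span_L2'])
  fix e :: real assume g: "g \<in> closed_span_L2 M Past" and e: "e > 0"
  then obtain h where h: "h \<in> lin_span_rv Past" "(\<integral>\<omega>. (g \<omega> - h \<omega>)^2 \<partial>M) < e"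
    unfolding closed_span_L2_def by blast
  show "\<exists>f. f \<in> L2rv M \<and> (\<integral>\<omega>. w 0 \<omega> * f \<omega> \<partial>M) = 0 \<and> (\<integral>\<omega>. (g \<omega> - f \<omega>)^2 \<partial>M) < e"
    using h lin_span_L2[OF Past_L2 h(1)] orth_span[OF h(1)] by blast
qed

lemma xw_past: "(\<lambda>\<omega>. x 0 \<omega> - w 0 \<omega>) \<in> closed_span_L2 M Past"
  unfolding closed_span_L2_def
proof (intro CollectI conjI allI impI L2_diff x_L2 w_L2)
  fix e :: real assume e: "e > 0"
  from order_tendstoD(2)[OF x_series[of 0] e] obtain N where
    N: "\<And>n. n \<ge> N \<Longrightarrow> (\<integral>\<omega>. (x 0 \<omega> - (w 0 \<omega> + (\<Sum>l=1..n. w (0 - int l) \<omega> / (1 + real l))))^2 \<partial>M) < e"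
    unfolding eventually_sequentially by blast
  let ?h = "\<lambda>\<omega>. \<Sum>l=1..N. w (0 - int l) \<omega> / (1 + real l)"
  have hs: "?h \<in> lin_span_rv Past"
  proof (rule lin_span_sum)
    fix l assume l: "l \<in> {1..N}"
    have "(\<lambda>\<omega>. (1 / (1 + real l)) * w (0 - int l) \<omega>) \<in> lin_span_rv Past"
      by (rule lin_span_scale, rule lin_span_base) (use l in auto)
    thus "(\<lambda>\<omega>. w (0 - int l) \<omega> / (1 + real l)) \<in> lin_span_rv Past" by simp
  qed
  have "(\<integral>\<omega>. (x 0 \<omega> - w 0 \<omega> - ?h \<omega>)^2 \<partial>M) < e"
    using N[of N] by (simp add: algebra_simps)
  note ineq = this
  show "\<exists>h\<in>lin_span_rv Past. (\<integral>\<omega>. (x 0 \<omega> - w 0 \<omega> - h \<omega>)^2 \<partial>M) < e"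
    by (rule bexI[where x="?h"]) (rule ineq, rule hs)
qed

lemma sq_expand:
  assumes "f \<in> L2rv M" "g \<in> L2rv M"
  shows "(\<integral>\<omega>. (f \<omega> + g \<omega>)^2 \<partial>M) = (\<integral>\<omega>. (f \<omega>)^2 \<partial>M) + 2 * (\<integral>\<omega>. f \<omega> * g \<omega> \<partial>M) + (\<integral>\<omega>. (g \<omega>)^2 \<partial>M)"
proof -
  have "(\<lambda>\<omega>. (f \<omega> + g \<omega>)^2) = (\<lambda>\<omega>. (f \<omega>)^2 + 2 * (f \<omega> * g \<omega>) + (g \<omega>)^2)"
    by (auto simp: power2_sum algebra_simps)
  thus ?thesis using assms by (simp add: L2rv_int L2_mult_int)
qed

abbreviation xi where "xi \<equiv> (\<lambda>\<omega>. (\<chi> i. if i = 1 then x 0 \<omega> else w 0 \<omega>) :: real^2)"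

lemma xi1: "xi \<omega> $ 1 = x 0 \<omega>" by simp
lemma xi2: "xi \<omega> $ 2 = w 0 \<omega>" using two_ne_one by simp

lemma err_quad:
  assumes "(\<lambda>\<omega>. xih \<omega> $ 1) \<in> L2rv M" "(\<lambda>\<omega>. xih \<omega> $ 2) \<in> L2rv M"
  shows "z \<bullet> (err_cov M xi xih *v z) = (\<integral>\<omega>. (z$1 * (x 0 \<omega> - xih \<omega> $ 1) + z$2 * (w 0 \<omega> - xih \<omega> $ 2))^2 \<partial>M)"
proof -
  have e1: "(\<lambda>\<omega>. (xi \<omega> - xih \<omega>) $ 1) \<in> L2rv M"
    using L2_diff[OF x_L2[of 0] assms(1)] by simp
  have e2: "(\<lambda>\<omega>. (xi \<omega> - xih \<omega>) $ 2) \<in> L2rv M"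
    using L2_diff[OF w_L2[of 0] assms(2)] two_ne_one by simp
  show ?thesis unfolding err_cov_def quad_form[OF e1 e2] using two_ne_one by simp
qed

lemma forward_lb:
  assumes h1: "(\<lambda>\<omega>. xih \<omega> $ 1) \<in> closed_span_L2 M Past" and h2: "(\<lambda>\<omega>. xih \<omega> $ 2) \<in> closed_span_L2 M Past"
  shows "loewner_le (\<chi> i j. 1) (err_cov M xi xih)"
  unfolding loewner_le_def
proof
  fix z :: "real^2"
  define a where "a = z$1 + z$2"
  define h1f where "h1f = (\<lambda>\<omega>. xih \<omega> $ 1)"
  define h2f where "h2f = (\<lambda>\<omega>. xih \<omega> $ 2)"
  have L1: "h1f \<in> L2rv M" unfolding h1f_def by (rule closed_span_L2'[OF h1])
  have L2: "h2f \<in> L2rv M" unfolding h2f_def by (rule closed_span_L2'[OF h2])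
  define g1 where "g1 = (\<lambda>\<omega>. x 0 \<omega> - w 0 \<omega>)"
  have Lg: "g1 \<in> L2rv M" unfolding g1_def by (intro L2_diff x_L2 w_L2)
  define u where "u = (\<lambda>\<omega>. z$1 * g1 \<omega> - z$1 * h1f \<omega> - z$2 * h2f \<omega>)"
  have Lu: "u \<in> L2rv M" unfolding u_def by (intro L2_diff L2_scale Lg L1 L2)
  have Lw: "(\<lambda>\<omega>. a * w 0 \<omega>) \<in> L2rv M" by (intro L2_scale w_L2)
  have o1: "(\<integral>\<omega>. w 0 \<omega> * g1 \<omega> \<partial>M) = 0" unfolding g1_def by (rule orth_closed[OF xw_past])
  have o2: "(\<integral>\<omega>. w 0 \<omega> * h1f \<omega> \<partial>M) = 0" unfolding h1f_def by (rule orth_closed[OF h1])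
  have o3: "(\<integral>\<omega>. w 0 \<omega> * h2f \<omega> \<partial>M) = 0" unfolding h2f_def by (rule orth_closed[OF h2])
  have iwg: "integrable M (\<lambda>\<omega>. w 0 \<omega> * g1 \<omega>)" by (rule L2_mult_int[OF w_L2 Lg])
  have iw1: "integrable M (\<lambda>\<omega>. w 0 \<omega> * h1f \<omega>)" by (rule L2_mult_int[OF w_L2 L1])
  have iw2: "integrable M (\<lambda>\<omega>. w 0 \<omega> * h2f \<omega>)" by (rule L2_mult_int[OF w_L2 L2])
  have "(\<lambda>\<omega>. w 0 \<omega> * u \<omega>) = (\<lambda>\<omega>. z$1 * (w 0 \<omega> * g1 \<omega>) - z$1 * (w 0 \<omega> * h1f \<omega>) - z$2 * (w 0 \<omega> * h2f \<omega>))"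
    unfolding u_def by (simp add: algebra_simps)
  hence ou: "(\<integral>\<omega>. w 0 \<omega> * u \<omega> \<partial>M) = 0" using iwg iw1 iw2 o1 o2 o3 by simp
  have "(\<lambda>\<omega>. (z$1 * (x 0 \<omega> - xih \<omega> $ 1) + z$2 * (w 0 \<omega> - xih \<omega> $ 2))^2) = (\<lambda>\<omega>. (a * w 0 \<omega> + u \<omega>)^2)"
    unfolding a_def u_def g1_def h1f_def h2f_def by (simp add: algebra_simps)
  hence "z \<bullet> (err_cov M xi xih *v z) = (\<integral>\<omega>. (a * w 0 \<omega> + u \<omega>)^2 \<partial>M)"
    using err_quad[OF L1[unfolded h1f_def] L2[unfolded h2f_def]] by simp
  also have "\<dots> = (\<integral>\<omega>. (a * w 0 \<omega>)^2 \<partial>M) + 2 * (\<integral>\<omega>. (a * w 0 \<omega>) * u \<omega> \<partial>M) + (\<integral>\<omega>. (u \<omega>)^2 \<partial>M)"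
    by (rule sq_expand[OF Lw Lu])
  also have "(\<integral>\<omega>. (a * w 0 \<omega>)^2 \<partial>M) = a^2"
    using w_var[of 0] by (simp add: power_mult_distrib)
  also have "(\<integral>\<omega>. (a * w 0 \<omega>) * u \<omega> \<partial>M) = 0"
    using ou by (simp add: mult.assoc)
  finally have "z \<bullet> (err_cov M xi xih *v z) = a^2 + (\<integral>\<omega>. (u \<omega>)^2 \<partial>M)" by simp
  moreover have "(\<integral>\<omega>. (u \<omega>)^2 \<partial>M) \<ge> 0" by simp
  ultimately show "z \<bullet> ((\<chi> i j. 1) *v z) \<le> z \<bullet> (err_cov M xi xih *v z)"
    unfolding ones_form a_def by simp
qed

lemma zero_closed: "(\<lambda>\<omega>. 0) \<in> closed_span_L2 M S"
  unfolding closed_span_L2_def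
proof (intro CollectI conjI allI impI L2_zero)
  fix e :: real assume e: "e > 0"
  show "\<exists>h\<in>lin_span_rv S. (\<integral>\<omega>. (0 - h \<omega>)^2 \<partial>M) < e"
    by (rule bexI[where x="\<lambda>\<omega>. 0"]) (simp_all add: e lin_span_zero)
qed

lemma forward_attained:
  defines "xih0 \<equiv> (\<lambda>\<omega>. (\<chi> i. if i = 1 then x 0 \<omega> - w 0 \<omega> else 0) :: real^2)"
  shows "\<forall>i. (\<lambda>\<omega>. xih0 \<omega> $ i) \<in> closed_span_L2 M Past" "err_cov M xi xih0 = (\<chi> i j. 1)"
proof -
  show "\<forall>i. (\<lambda>\<omega>. xih0 \<omega> $ i) \<in> closed_span_L2 M Past"
  proof
    fix i :: 2
    show "(\<lambda>\<omega>. xih0 \<omega> $ i) \<in> closed_span_L2 M Past"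
    proof (cases "i = 1")
      case True
      hence "(\<lambda>\<omega>. xih0 \<omega> $ i) = (\<lambda>\<omega>. x 0 \<omega> - w 0 \<omega>)" unfolding xih0_def by simp
      thus ?thesis using xw_past by simp
    next
      case False
      hence "(\<lambda>\<omega>. xih0 \<omega> $ i) = (\<lambda>\<omega>. 0)" unfolding xih0_def by simp
      thus ?thesis using zero_closed by simp
    qed
  qed
  have c: "(xi \<omega> - xih0 \<omega>) $ i = w 0 \<omega>" for \<omega> i
    unfolding xih0_def by (cases "i = 1") simp_all
  have "err_cov M xi xih0 = (\<chi> i j. \<integral>\<omega>. w 0 \<omega> * w 0 \<omega> \<partial>M)"
    unfolding err_cov_def by (simp only: c)
  also have "\<dots> = (\<chi> i j. 1)" by (simp add: w_cov)
  finally show "err_cov M xi xih0 = (\<chi> i j. 1)" .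
qed

theorem forward:
  "is_loewner_inf {err_cov M xi xih | xih. \<forall>i. (\<lambda>\<omega>. xih \<omega> $ i) \<in> closed_span_L2 M Past} (\<chi> i j. 1)"
  unfolding is_loewner_inf_def
proof (intro conjI ballI allI impI)
  show "symmetric_mat (\<chi> i j. 1)" by (rule ones_sym)
next
  fix A assume "A \<in> {err_cov M xi xih | xih. \<forall>i. (\<lambda>\<omega>. xih \<omega> $ i) \<in> closed_span_L2 M Past}"
  then obtain xih where A: "A = err_cov M xi xih" "\<forall>i. (\<lambda>\<omega>. xih \<omega> $ i) \<in> closed_span_L2 M Past" by blast
  show "loewner_le (\<chi> i j. 1) A" unfolding A(1) by (rule forward_lb) (use A(2) in auto)
next
  fix Q assume "symmetric_mat Q \<and> (\<forall>A\<in>{err_cov M xi xih | xih. \<forall>i. (\<lambda>\<omega>. xih \<omega> $ i) \<in> closed_span_L2 M Past}. loewner_le Q A)"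
  hence Q: "\<forall>A\<in>{err_cov M xi xih | xih. \<forall>i. (\<lambda>\<omega>. xih \<omega> $ i) \<in> closed_span_L2 M Past}. loewner_le Q A" by blast
  have "(\<chi> i j. 1) \<in> {err_cov M xi xih | xih. \<forall>i. (\<lambda>\<omega>. xih \<omega> $ i) \<in> closed_span_L2 M Past}"
    by (rule CollectI, rule exI[where x="\<lambda>\<omega>. \<chi> i. if i = 1 then x 0 \<omega> - w 0 \<omega> else 0"])
       (rule conjI[OF forward_attained(2)[symmetric] forward_attained(1)])
  thus "loewner_le Q (\<chi> i j. 1)" using Q by blast
qed

theorem backward:
  "is_loewner_inf {err_cov M xi xih | xih. \<forall>i. (\<lambda>\<omega>. xih \<omega> $ i) \<in> closed_span_L2 M Fut} 0"
  unfolding is_loewner_inf_def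
proof (intro conjI ballI allI impI)
  show "symmetric_mat 0" by (rule zero_sym)
next
  fix A assume "A \<in> {err_cov M xi xih | xih. \<forall>i. (\<lambda>\<omega>. xih \<omega> $ i) \<in> closed_span_L2 M Fut}"
  then obtain xih where A: "A = err_cov M xi xih" "\<forall>i. (\<lambda>\<omega>. xih \<omega> $ i) \<in> closed_span_L2 M Fut" by blast
  show "loewner_le 0 A" unfolding loewner_le_def
  proof
    fix z :: "real^2"
    have "z \<bullet> (A *v z) = (\<integral>\<omega>. (z$1 * (x 0 \<omega> - xih \<omega> $ 1) + z$2 * (w 0 \<omega> - xih \<omega> $ 2))^2 \<partial>M)"
      unfolding A(1) by (rule err_quad[OF closed_span_L2'[OF spec[OF A(2), of 1]] closed_span_L2'[OF spec[OF A(2), of 2]]])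
    also have "\<dots> \<ge> 0" by simp
    finally show "z \<bullet> (0 *v z) \<le> z \<bullet> (A *v z)" by simp
  qed
next
  fix Q assume "symmetric_mat Q \<and> (\<forall>A\<in>{err_cov M xi xih | xih. \<forall>i. (\<lambda>\<omega>. xih \<omega> $ i) \<in> closed_span_L2 M Fut}. loewner_le Q A)"
  hence Q: "\<forall>A\<in>{err_cov M xi xih | xih. \<forall>i. (\<lambda>\<omega>. xih \<omega> $ i) \<in> closed_span_L2 M Fut}. loewner_le Q A" by blast
  have c: "\<forall>i. (\<lambda>\<omega>. xi \<omega> $ i) \<in> closed_span_L2 M Fut"
  proof
    fix i :: 2
    show "(\<lambda>\<omega>. xi \<omega> $ i) \<in> closed_span_L2 M Fut"
      by (cases "i = 1") (simp_all add: x0_fut w0_fut)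
  qed
  have e: "err_cov M xi xi = 0"
    unfolding err_cov_def by (simp only: diff_self zero_index mult_zero_left integral_zero) (simp add: vec_eq_iff)
  have "0 \<in> {err_cov M xi xih | xih. \<forall>i. (\<lambda>\<omega>. xih \<omega> $ i) \<in> closed_span_L2 M Fut}"
    by (rule CollectI, rule exI[where x=xi]) (rule conjI[OF e[symmetric] c])
  thus "loewner_le Q 0" using Q by blast
qed

end

theorem mainTheorem8:
  fixes M :: "'a measure" and w x :: "int \<Rightarrow> 'a \<Rightarrow> real"
  assumes "prob_space M"
    and gauss: "\<And>k. distributed M lborel (w k) std_normal_density"
    and indep: "prob_space.indep_vars M (\<lambda>_. borel) w UNIV"
    and x_L2: "\<And>k. x k \<in> L2rv M"
    and x_series: "\<And>k. (\<lambda>n. \<integral>\<omega>. (x k \<omega> - (w k \<omega> +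
            (\<Sum>l=1..n. w (k - int l) \<omega> / (1 + real l))))^2 \<partial>M) \<longlonglongrightarrow> 0"
  shows "is_loewner_inf
           {err_cov M (\<lambda>\<omega>. \<chi> i. if i = 1 then x 0 \<omega> else w 0 \<omega>) xih | xih.
              \<forall>i. (\<lambda>\<omega>. xih \<omega> $ i) \<in> closed_span_L2 M ({x k | k. k \<le> -1} \<union> {w k | k. k \<le> -1})}
           (\<chi> i j. 1)
       \<and> is_loewner_inf
           {err_cov M (\<lambda>\<omega>. \<chi> i. if i = 1 then x 0 \<omega> else w 0 \<omega>) xih | xih.
              \<forall>i. (\<lambda>\<omega>. xih \<omega> $ i) \<in> closed_span_L2 M ({x k | k. k \<ge> 1} \<union> {w k | k. k \<ge> 1})}
           0"
proof -
  have "gsetting M w x"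
    unfolding gsetting_def gsetting_axioms_def using assms by blast
  then interpret g: gsetting M w x .
  show ?thesis using g.forward g.backward by (rule conjI)
qed

end
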